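(* There is an absolute constant $C>0$ such that for every $n\ge2$, all monotone non-decreasing subadditive valuations $v_1,\dots,v_n:[0,1]\to\mathbb R_{\ge0}$ and all budgets $B_1,\dots,B_n>0$, the final allocation $y$ of the Estimate-and-Price auction satisfies $\bar W(y)\ge\frac{1}{C\log^2 n}\bar W^*$.
   Context: Subadditive: $v_i(a+b)\le v_i(a)+v_i(b)$ whenever $a,b,a+b\in[0,1]$. One divisible good (the interval $[0,1]$), $n\ge2$ players. Let $\bar v_i(y)=\min\{v_i(y),B_i\}$ and $k=\lceil 8\log_2 n\rceil$. Liquid welfare: $\bar W(y)=\sum_i\min\{v_i(y_i),B_i\}$; $\bar W^*=\sup\{\bar W(y):y\in\mathbb R^n_{\ge0},\sum_iy_i=1\}$. Sell-Without-$r$ (for a player $r$): define $p:[0,\frac12]\to\mathbb R_{\ge0}$ by $p(t)=p_j=\frac{2^j}{8}\bar v_r(\frac12)$ for $t\in[\frac{j-1}{2k},\frac{j}{2k})$, $j=1,\dots,k$. The players other than $r$ are processed in a fixed arbitrary order; when player $i$'s turn comes, let $z_i$ be the total amount taken by earlier players; player $i$ takes $x_i\in[0,\frac12-z_i]$ maximizing $v_i(x_i)-\int_{z_i}^{z_i+x_i}p(t)\,dt$ subject to $\int_{z_i}^{z_i+x_i}p(t)\,dt\le B_i$, and pays $\pi_i=\int_{z_i}^{z_i+x_i}p(t)\,dt$. Estimate-and-Price: let $r_1=\arg\max_i\bar v_i(\frac12)$ and $r_2=\arg\max_{i\ne r_1}\bar v_i(\frac12)$ (fixed tie-breaking). Let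 $(x,\pi)$ be the outcome of Sell-Without-$r_1$ on players $[n]\setminus\{r_1\}$ and $(x',\pi')$ that of Sell-Without-$r_2$ on players $[n]\setminus\{r_2\}$. Each $i\ne r_1$ receives $x_i$ and pays $\pi_i$. Player $r_1$ receives $x'_{r_1}$ and pays $\pi'_{r_1}$ if $v_{r_1}(x'_{r_1})-\pi'_{r_1}\ge v_{r_1}(\frac12)-2\bar v_{r_2}(\frac12)$; otherwise he receives $\frac12$ and pays $2\bar v_{r_2}(\frac12)$. *)

theory Defs
  imports "HOL-Analysis.Analysis"
begin

definition valuation :: "(real \<Rightarrow> real) \<Rightarrow> bool" where
  "valuation f \<longleftrightarrow>
     f 0 = 0 \<and>
     (\<forall>a\<in>{0..1}. 0 \<le> f a) \<and>
     (\<forall>a\<in>{0..1}. \<forall>b\<in>{0..1}. a \<le> b \<longrightarrow> f a \<le> f b) \<and>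
     (\<forall>a b. 0 \<le> a \<longrightarrow> 0 \<le> b \<longrightarrow> a + b \<le> 1 \<longrightarrow> f (a + b) \<le> f a + f b)"

definition vbar :: "(nat \<Rightarrow> real \<Rightarrow> real) \<Rightarrow> (nat \<Rightarrow> real) \<Rightarrow> nat \<Rightarrow> real \<Rightarrow> real" where
  "vbar v B i y = min (v i y) (B i)"

definition liquid_welfare :: "(nat \<Rightarrow> real \<Rightarrow> real) \<Rightarrow> (nat \<Rightarrow> real) \<Rightarrow> nat \<Rightarrow> (nat \<Rightarrow> real) \<Rightarrow> real" where
  "liquid_welfare v B n y = (\<Sum>i<n. vbar v B i (y i))"

definition opt_liquid_welfare :: "(nat \<Rightarrow> real \<Rightarrow> real) \<Rightarrow> (nat \<Rightarrow> real) \<Rightarrow> nat \<Rightarrow> real" where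
  "opt_liquid_welfare v B n =
     Sup {liquid_welfare v B n y | y. (\<forall>i<n. 0 \<le> y i) \<and> (\<Sum>i<n. y i) = 1}"

definition kpar :: "nat \<Rightarrow> nat" where
  "kpar n = nat \<lceil>8 * log 2 (real n)\<rceil>"

text \<open>Price curve p(t) = 2^j/8 * c for t in [(j-1)/(2k), j/(2k)), j = 1..k,
  where c = vbar_r(1/2); it is only used on [0,1/2].\<close>
definition price :: "nat \<Rightarrow> real \<Rightarrow> real \<Rightarrow> real" where
  "price k c t = (if 0 \<le> t \<and> t < 1/2
                  then 2 ^ (nat \<lfloor>2 * real k * t\<rfloor> + 1) / 8 * c else 0)"

definition cost :: "nat \<Rightarrow> real \<Rightarrow> real \<Rightarrow> real \<Rightarrow> real" where
  "cost k c z a = integral {z..z + a} (price k c)"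

text \<open>(x, pay) is a possible outcome of Sell-Without-r, where the players
  other than r are processed in the order given by the list ord.\<close>
definition sell_without ::
  "(nat \<Rightarrow> real \<Rightarrow> real) \<Rightarrow> (nat \<Rightarrow> real) \<Rightarrow> nat \<Rightarrow> nat \<Rightarrow> nat list
    \<Rightarrow> (nat \<Rightarrow> real) \<Rightarrow> (nat \<Rightarrow> real) \<Rightarrow> bool" where
  "sell_without v B n r ord x pay \<longleftrightarrow>
     distinct ord \<and> set ord = {i. i < n \<and> i \<noteq> r} \<and>
     (\<forall>m < length ord.
        let i = ord ! m;
            z = (\<Sum>j<m. x (ord ! j));
            P = cost (kpar n) (vbar v B r (1/2)) z
        in 0 \<le> x i \<and> x i \<le> 1/2 - z \<and> P (x i) \<le> B i \<and>
           (\<forall>a. 0 \<le> a \<and> a \<le> 1/2 - z \<and> P a \<le> B i \<longrightarrow>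
                 v i a - P a \<le> v i (x i) - P (x i)) \<and>
           pay i = P (x i))"

definition ep_allocation ::
  "(nat \<Rightarrow> real \<Rightarrow> real) \<Rightarrow> (nat \<Rightarrow> real) \<Rightarrow> nat \<Rightarrow> nat
    \<Rightarrow> (nat \<Rightarrow> real) \<Rightarrow> (nat \<Rightarrow> real) \<Rightarrow> (nat \<Rightarrow> real) \<Rightarrow> nat \<Rightarrow> real" where
  "ep_allocation v B r1 r2 x x' pay' i =
     (if i \<noteq> r1 then x i
      else if v r1 (x' r1) - pay' r1 \<ge> v r1 (1/2) - 2 * vbar v B r2 (1/2) then x' r1
      else 1/2)"

definition is_r1 :: "(nat \<Rightarrow> real \<Rightarrow> real) \<Rightarrow> (nat \<Rightarrow> real) \<Rightarrow> nat \<Rightarrow> nat \<Rightarrow> bool" where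
  "is_r1 v B n r1 \<longleftrightarrow> r1 < n \<and> (\<forall>i<n. vbar v B i (1/2) \<le> vbar v B r1 (1/2))"

definition is_r2 :: "(nat \<Rightarrow> real \<Rightarrow> real) \<Rightarrow> (nat \<Rightarrow> real) \<Rightarrow> nat \<Rightarrow> nat \<Rightarrow> nat \<Rightarrow> bool" where
  "is_r2 v B n r1 r2 \<longleftrightarrow> r2 < n \<and> r2 \<noteq> r1 \<and>
     (\<forall>i<n. i \<noteq> r1 \<longrightarrow> vbar v B i (1/2) \<le> vbar v B r2 (1/2))"

end

theory Submission
  imports Defs
begin


lemma price_nonneg: "0 \<le> c \<Longrightarrow> 0 \<le> price k c t"
  unfolding price_def by auto

lemma price_le:
  assumes "0 \<le> c" "t \<le> T"
  shows "price k c t \<le> 2 ^ (nat \<lfloor>2 * real k * T\<rfloor> + 1) / 8 * c"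
proof (cases "0 \<le> t \<and> t < 1/2")
  case True
  have "2 * real k * t \<le> 2 * real k * T" using assms by (simp add: mult_left_mono)
  hence "nat \<lfloor>2 * real k * t\<rfloor> \<le> nat \<lfloor>2 * real k * T\<rfloor>"
    by (simp add: floor_mono nat_mono)
  hence "(2::real) ^ (nat \<lfloor>2 * real k * t\<rfloor> + 1) \<le> 2 ^ (nat \<lfloor>2 * real k * T\<rfloor> + 1)"
    by (intro power_increasing) auto
  then show ?thesis using True assms unfolding price_def
    by (simp add: divide_right_mono mult_right_mono)
next
  case False
  hence "price k c t = 0" by (auto simp: price_def)
  then show ?thesis using assms by simp
qed

lemma price_ge:
  assumes "0 \<le> c" "0 \<le> t" "t < 1/2" "S \<le> t"
  shows "2 ^ (nat \<lfloor>2 * real k * S\<rfloor> + 1) / 8 * c \<le> price k c t"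
proof -
  have "2 * real k * S \<le> 2 * real k * t" using assms by (simp add: mult_left_mono)
  hence "nat \<lfloor>2 * real k * S\<rfloor> \<le> nat \<lfloor>2 * real k * t\<rfloor>"
    by (simp add: floor_mono nat_mono)
  hence "(2::real) ^ (nat \<lfloor>2 * real k * S\<rfloor> + 1) \<le> 2 ^ (nat \<lfloor>2 * real k * t\<rfloor> + 1)"
    by (intro power_increasing) auto
  then show ?thesis using assms unfolding price_def
    by (simp add: divide_right_mono mult_right_mono)
qed

lemma price_int:
  assumes "0 \<le> c" "0 \<le> a" "b \<le> 1/2"
  shows "price k c integrable_on {a..b}"
proof -
  let ?g = "\<lambda>t. (2::real) ^ (nat \<lfloor>2 * real k * t\<rfloor> + 1) / 8 * c"
  have "mono_on {a..b} ?g"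
  proof (rule mono_onI)
    fix r s :: real assume "r \<le> s"
    have "2 * real k * r \<le> 2 * real k * s" using \<open>r \<le> s\<close> by (simp add: mult_left_mono)
    hence "nat \<lfloor>2 * real k * r\<rfloor> \<le> nat \<lfloor>2 * real k * s\<rfloor>"
      by (simp add: floor_mono nat_mono)
    hence "(2::real) ^ (nat \<lfloor>2 * real k * r\<rfloor> + 1) \<le> 2 ^ (nat \<lfloor>2 * real k * s\<rfloor> + 1)"
      by (intro power_increasing) auto
    then show "?g r \<le> ?g s" using assms by (simp add: divide_right_mono mult_right_mono)
  qed
  hence "?g integrable_on {a..b}" by (rule integrable_on_mono_on)
  show ?thesis
  proof (rule integrable_spike_finite[where S="{1/2}" and f="?g"])
    fix x assume "x \<in> {a..b} - {1/2}"
    then show "price k c x = ?g x" using assms by (auto simp: price_def)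
  qed (use \<open>?g integrable_on {a..b}\<close> in auto)
qed

lemma cost_nonneg:
  assumes "0 \<le> c" "0 \<le> z" "0 \<le> a" "z + a \<le> 1/2"
  shows "0 \<le> cost k c z a"
  unfolding cost_def
  by (rule integral_nonneg) (use assms price_int price_nonneg in auto)

lemma cost_le:
  assumes "0 \<le> c" "0 \<le> z" "0 \<le> a" "z + a \<le> 1/2" "\<And>t. z \<le> t \<Longrightarrow> t \<le> z + a \<Longrightarrow> price k c t \<le> M"
  shows "cost k c z a \<le> a * M"
proof -
  have "cost k c z a \<le> integral {z..z+a} (\<lambda>t. M)"
    unfolding cost_def
    by (rule integral_le) (use assms price_int in auto)
  then show ?thesis using assms by simp
qed

lemma int_ge:
  assumes "0 \<le> c" "0 \<le> s" "s \<le> t" "t \<le> 1/2" "\<And>u. s \<le> u \<Longrightarrow> u \<le> t \<Longrightarrow> M \<le> price k c u"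
  shows "(t - s) * M \<le> integral {s..t} (price k c)"
proof -
  have "integral {s..t} (\<lambda>t. M) \<le> integral {s..t} (price k c)"
    by (rule integral_le) (use assms price_int in auto)
  then show ?thesis using assms by simp
qed

lemma int_mono:
  assumes "0 \<le> c" "0 \<le> a" "a \<le> s" "s \<le> t" "t \<le> b" "b \<le> 1/2"
  shows "integral {s..t} (price k c) \<le> integral {a..b} (price k c)"
  by (rule integral_subset_le) (use assms price_int price_nonneg in auto)




lemma val_mono: "valuation f \<Longrightarrow> 0 \<le> a \<Longrightarrow> a \<le> b \<Longrightarrow> b \<le> 1 \<Longrightarrow> f a \<le> f b"
  unfolding valuation_def by auto

lemma val_nonneg: "valuation f \<Longrightarrow> 0 \<le> a \<Longrightarrow> a \<le> 1 \<Longrightarrow> 0 \<le> f a"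
  unfolding valuation_def by auto

lemma val_le2: assumes "valuation f" "0 \<le> y" "y \<le> 1" shows "f y \<le> 2 * f (1/2)"
proof (cases "y \<le> 1/2")
  case True
  then show ?thesis using val_mono[OF assms(1) assms(2) True] val_nonneg[OF assms(1), of "1/2"] by simp
next
  case False
  have sub: "\<And>a b. 0\<le>a \<Longrightarrow> 0\<le>b \<Longrightarrow> a+b \<le> 1 \<Longrightarrow> f(a+b) \<le> f a + f b"
    using assms(1) unfolding valuation_def by blast
  have "f ((y - 1/2) + 1/2) \<le> f (y - 1/2) + f (1/2)"
    by (rule sub) (use assms False in auto)
  moreover have "f (y - 1/2) \<le> f (1/2)" using val_mono[OF assms(1), of "y - 1/2" "1/2"] False assms by simp
  ultimately show ?thesis by simp
qed

lemma val_mult: assumes "valuation f" "0 \<le> a" "real m * a \<le> 1" shows "f (real m * a) \<le> real m * f a"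
  using assms(3)
proof (induction m)
  case 0
  then show ?case using assms unfolding valuation_def by simp
next
  case (Suc m)
  have h: "real m * a \<le> 1" using Suc.prems assms(2) by (simp add: algebra_simps)
  have "f (real m * a + a) \<le> f (real m * a) + f a"
    using assms Suc.prems unfolding valuation_def by (auto simp: algebra_simps)
  also have "\<dots> \<le> real m * f a + f a" using Suc.IH[OF h] by simp
  finally show ?case by (simp add: algebra_simps)
qed

lemma vbar_nonneg: "valuation (v i) \<Longrightarrow> 0 < B i \<Longrightarrow> 0 \<le> y \<Longrightarrow> y \<le> 1 \<Longrightarrow> 0 \<le> vbar v B i y"
  unfolding vbar_def using val_nonneg by fastforce

lemma vbar_le2: assumes "valuation (v i)" "0 < B i" "0 \<le> y" "y \<le> 1"
  shows "vbar v B i y \<le> 2 * vbar v B i (1/2)"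
  using val_le2[OF assms(1,3,4)] assms(2) unfolding vbar_def by (auto simp: min_def)

locale sw =
  fixes v B n r ord x pay
  assumes sw: "sell_without v B n r ord x pay"
    and val: "\<And>i. i<n \<Longrightarrow> valuation (v i)"
    and Bpos: "\<And>i. i<n \<Longrightarrow> B i > 0"
    and rn: "r < n"
begin

definition "c = vbar v B r (1/2)"
definition "k = kpar n"
definition "z m = (\<Sum>j<m. x (ord!j))"
definition "Z = z (length ord)"

lemma c_nonneg: "0 \<le> c" unfolding c_def using vbar_nonneg val Bpos rn by simp

lemma dist: "distinct ord" and setord: "set ord = {i. i < n \<and> i \<noteq> r}"
  using sw unfolding sell_without_def by auto

lemma ord_lt: "m < length ord \<Longrightarrow> ord ! m < n \<and> ord ! m \<noteq> r"
  using setord nth_mem by fastforce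

lemma step:
  assumes "m < length ord"
  shows "0 \<le> x (ord!m)" "x (ord!m) \<le> 1/2 - z m" "cost k c (z m) (x (ord!m)) \<le> B (ord!m)"
    "\<And>a. 0 \<le> a \<Longrightarrow> a \<le> 1/2 - z m \<Longrightarrow> cost k c (z m) a \<le> B (ord!m) \<Longrightarrow>
        v (ord!m) a - cost k c (z m) a \<le> v (ord!m) (x (ord!m)) - cost k c (z m) (x (ord!m))"
    "pay (ord!m) = cost k c (z m) (x (ord!m))"
  using sw assms unfolding sell_without_def Let_def z_def c_def k_def by auto

lemma z_bounds: "m \<le> length ord \<Longrightarrow> 0 \<le> z m \<and> z m \<le> 1/2"
proof (induction m)
  case 0 then show ?case by (simp add: z_def)
next
  case (Suc m)
  have "z (Suc m) = z m + x (ord!m)" by (simp add: z_def)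
  then show ?case using Suc step[of m] by auto
qed

lemma z_mono: "m \<le> m' \<Longrightarrow> m' \<le> length ord \<Longrightarrow> z m \<le> z m'"
  unfolding z_def
  by (rule sum_mono2) (use step(1) in auto)

lemma Z_bounds: "0 \<le> Z" "Z \<le> 1/2" using z_bounds[of "length ord"] by (auto simp: Z_def)

lemma z_le_Z: "m \<le> length ord \<Longrightarrow> z m \<le> Z" using z_mono by (simp add: Z_def)

lemma pay_nonneg: "m < length ord \<Longrightarrow> 0 \<le> pay (ord!m)"
  using step[of m] z_bounds[of m] z_bounds[of "Suc m"] c_nonneg
  by (auto intro!: cost_nonneg)

lemma cost0: "0 \<le> zz \<Longrightarrow> cost k c zz 0 = 0" unfolding cost_def by simp

lemma pay_le_vbar: assumes "m < length ord" shows "pay (ord!m) \<le> vbar v B (ord!m) (x (ord!m))"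
proof -
  have "v (ord!m) 0 - cost k c (z m) 0 \<le> v (ord!m) (x (ord!m)) - cost k c (z m) (x (ord!m))"
    using step(4)[OF assms, of 0] z_bounds[of m] assms cost0 Bpos[of "ord!m"] ord_lt[OF assms] by auto
  moreover have "v (ord!m) 0 = 0" using val ord_lt[OF assms] unfolding valuation_def by auto
  moreover have "0 \<le> z m" using z_bounds[of m] assms by auto
  ultimately show ?thesis using step[OF assms] cost0 unfolding vbar_def by auto
qed

lemma revenue: "m \<le> length ord \<Longrightarrow> (\<Sum>j<m. pay (ord!j)) = integral {0..z m} (price k c)"
proof (induction m)
  case 0 then show ?case by (simp add: z_def)
next
  case (Suc m)
  have zs: "z (Suc m) = z m + x (ord!m)" by (simp add: z_def)
  have b: "0 \<le> z m" "z m \<le> z (Suc m)" "z (Suc m) \<le> 1/2"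
    using z_bounds[of m] z_bounds[of "Suc m"] Suc.prems zs step(1)[of m] by auto
  have "integral {0..z m} (price k c) + integral {z m..z (Suc m)} (price k c) = integral {0..z (Suc m)} (price k c)"
    by (rule Henstock_Kurzweil_Integration.integral_combine) (use b c_nonneg price_int in auto)
  then show ?case using Suc step(5)[of m] zs by (simp add: cost_def)
qed

lemma Rev: "(\<Sum>j<length ord. pay (ord!j)) = integral {0..Z} (price k c)"
  using revenue by (simp add: Z_def)

lemma sum_set: "(\<Sum>i\<in>{i. i < n \<and> i \<noteq> r}. f i) = (\<Sum>j<length ord. f (ord!j))"
proof -
  have "(\<Sum>i\<in>{i. i < n \<and> i \<noteq> r}. f i) = sum_list (map f ord)"
    using sum_list_distinct_conv_sum_set[OF dist, of f] setord by simp
  also have "\<dots> = (\<Sum>j<length ord. f (ord!j))"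
    by (simp add: sum_list_sum_nth atLeast0LessThan)
  finally show ?thesis .
qed

lemma Rev_le: "integral {0..Z} (price k c) \<le> (\<Sum>i\<in>{i. i < n \<and> i \<noteq> r}. vbar v B i (x i))"
  unfolding sum_set Rev[symmetric] by (rule sum_mono) (use pay_le_vbar in auto)

lemma idx: assumes "i < n" "i \<noteq> r" obtains m where "m < length ord" "ord ! m = i"
  using assms setord by (metis (mono_tags, lifting) in_set_conv_nth mem_Collect_eq)

lemma x_bounds: assumes "i < n" "i \<noteq> r" shows "0 \<le> x i \<and> x i \<le> 1/2"
proof -
  obtain m where m: "m < length ord" "ord ! m = i" using idx assms by blast
  then show ?thesis using step(1,2)[OF m(1)] z_bounds[of m] by auto
qed

end



context sw begin

definition "q = 2 ^ (nat \<lfloor>2 * real k * Z\<rfloor> + 1) / 8 * c"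

lemma q_nonneg: "0 \<le> q" unfolding q_def using c_nonneg by simp

lemma dev_bound:
  assumes k1: "1 \<le> k" and ZZ: "Z \<le> 1/2 - 1/(2*k)" and i: "i < n" "i \<noteq> r"
    and y: "0 \<le> yi" "yi \<le> 1" and ci: "vbar v B i (1/2) \<le> c"
  shows "vbar v B i yi \<le> vbar v B i (x i) + (2*q + 4*k*c) * yi"
proof -
  have xnn: "0 \<le> vbar v B i (x i)" using vbar_nonneg[of v i B "x i"] val[OF i(1)] Bpos[OF i(1)] x_bounds[OF i] by auto
  have kp: "0 < real k" using k1 by simp
  show ?thesis
  proof (cases "yi \<le> 1/(2*k)")
    case True
    obtain m where m: "m < length ord" "ord ! m = i" using idx i by blast
    have zb: "0 \<le> z m" "z m \<le> Z" using z_bounds[of m] z_le_Z[of m] m by auto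
    have fl: "nat \<lfloor>2 * real k * (Z + 1/(2*k))\<rfloor> = nat \<lfloor>2 * real k * Z\<rfloor> + 1"
    proof -
      have e1: "2 * real k * (Z + 1/(2*k)) = 2 * real k * Z + 1" using kp by (simp add: field_simps)
      have e2: "\<lfloor>2 * real k * (Z + 1/(2*k))\<rfloor> = \<lfloor>2 * real k * Z\<rfloor> + 1" unfolding e1 by simp
      have e3: "0 \<le> \<lfloor>2 * real k * Z\<rfloor>" using Z_bounds by simp
      show ?thesis unfolding e2 using e3 by (simp add: nat_add_distrib)
    qed
    have pb: "price k c t \<le> 2 * q" if "t \<le> z m + yi" for t
    proof -
      have "t \<le> Z + 1/(2*k)" using that zb True by simp
      from price_le[OF c_nonneg this, of k] fl
      show ?thesis unfolding q_def by (simp add: power_add)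
    qed
    have zy: "z m + yi \<le> 1/2" using zb True ZZ by simp
    have cl: "cost k c (z m) yi \<le> yi * (2 * q)"
      by (rule cost_le) (use c_nonneg zb y zy pb in auto)
    have "vbar v B i yi \<le> vbar v B i (x i) + 2 * q * yi"
    proof (cases "cost k c (z m) yi \<le> B i")
      case True
      have "v i yi - cost k c (z m) yi \<le> v i (x i) - cost k c (z m) (x i)"
        using step(4)[OF m(1), of yi] True zy y m by auto
      moreover have "0 \<le> cost k c (z m) (x i)" using step(5)[OF m(1)] pay_nonneg[OF m(1)] m by simp
      ultimately have "v i yi \<le> v i (x i) + 2 * q * yi" using cl by (simp add: algebra_simps)
      moreover have "0 \<le> 2*q*yi" using q_nonneg y by simp
      ultimately show ?thesis unfolding vbar_def min_def by (smt (verit))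
    next
      case False
      then have "B i \<le> 2 * q * yi" using cl by (simp add: algebra_simps)
      then show ?thesis using xnn unfolding vbar_def by (auto simp: min_def)
    qed
    moreover have "0 \<le> 4 * k * c * yi" using c_nonneg y by simp
    ultimately show ?thesis by (simp add: algebra_simps)
  next
    case False
    have "1 \<le> 2 * k * yi" using False kp by (simp add: field_simps)
    hence "2 * c * 1 \<le> 2 * c * (2 * k * yi)" using c_nonneg by (intro mult_left_mono) auto
    hence "2 * c \<le> 4 * k * c * yi" by (simp add: algebra_simps)
    moreover have "vbar v B i yi \<le> 2 * c" using vbar_le2[of v i B yi] val Bpos i y ci by force
    moreover have "0 \<le> 2 * q * yi" using q_nonneg y by simp
    ultimately show ?thesis using xnn by (simp add: algebra_simps)
  qed
qed

lemma q_le: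
  assumes k1: "1 \<le> k" and ZZ: "Z < 1/2"
  shows "q \<le> c/4 + 4 * k * integral {0..Z} (price k c)"
proof -
  have kp: "0 < real k" using k1 by simp
  have inn: "0 \<le> integral {0..Z} (price k c)"
    using Rev sum_nonneg pay_nonneg by (metis lessThan_iff)
  show ?thesis
  proof (cases "1 \<le> 2 * real k * Z")
    case True
    have fl: "nat \<lfloor>2 * real k * (Z - 1/(2*k))\<rfloor> + 1 = nat \<lfloor>2 * real k * Z\<rfloor>"
    proof -
      have "2 * real k * (Z - 1/(2*k)) = 2 * real k * Z - 1" using kp by (simp add: field_simps)
      moreover have "1 \<le> \<lfloor>2 * real k * Z\<rfloor>" using True by linarith
      moreover have "\<And>f::int. 1 \<le> f \<Longrightarrow> nat (f - 1) + 1 = nat f"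
        by (metis add.commute le_add_diff_inverse nat_int nat_le_iff nat_one_as_int nat_add_distrib zero_le_one diff_ge_0_iff_ge)
      ultimately show ?thesis by simp
    qed
    have s0: "0 \<le> Z - 1/(2*k)" using True kp by (simp add: field_simps)
    have "(Z - (Z - 1/(2*k))) * (2 ^ (nat \<lfloor>2 * real k * (Z - 1/(2*k))\<rfloor> + 1) / 8 * c)
          \<le> integral {Z - 1/(2*k)..Z} (price k c)"
      by (rule int_ge) (use c_nonneg s0 Z_bounds ZZ price_ge in auto)
    also have "\<dots> \<le> integral {0..Z} (price k c)"
      by (rule int_mono) (use c_nonneg s0 Z_bounds in auto)
    finally have "(1/(2*k)) * (2 ^ (nat \<lfloor>2 * real k * (Z - 1/(2*k))\<rfloor> + 1) / 8 * c) \<le> integral {0..Z} (price k c)"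
      by simp
    hence "q / (4 * k) \<le> integral {0..Z} (price k c)" unfolding q_def fl[symmetric] by (simp add: field_simps)
    hence "q \<le> 4 * k * integral {0..Z} (price k c)" using kp by (simp add: field_simps)
    then show ?thesis using c_nonneg by simp
  next
    case False
    hence "\<lfloor>2 * real k * Z\<rfloor> = 0" using Z_bounds kp by (simp add: floor_eq_iff)
    hence "q = c/4" unfolding q_def by simp
    moreover have "0 \<le> 4 * real k * integral {0..Z} (price k c)" using inn kp by simp
    ultimately show ?thesis by simp
  qed
qed

lemma rev_big:
  assumes k2: "2 \<le> k" and ZZ: "1/2 - 1/(2*k) < Z"
  shows "2 ^ k * c / (32 * k) \<le> integral {0..Z} (price k c)"
proof -
  have kp: "0 < real k" using k2 by simp
  have fl: "nat \<lfloor>2 * real k * (1/2 - 1/k)\<rfloor> + 1 = k - 1"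
  proof -
    have "2 * real k * (1/2 - 1/k) = real k - 2" using kp by (simp add: field_simps)
    hence "\<lfloor>2 * real k * (1/2 - 1/k)\<rfloor> = int k - 2" by simp
    then show ?thesis using k2 by simp
  qed
  have s0: "0 \<le> 1/2 - 1/real k" using k2 by (simp add: field_simps)
  have "((1/2 - 1/(2*k)) - (1/2 - 1/k)) * (2 ^ (nat \<lfloor>2 * real k * (1/2 - 1/k)\<rfloor> + 1) / 8 * c)
          \<le> integral {1/2 - 1/k..1/2 - 1/(2*k)} (price k c)"
  proof (rule int_ge)
    fix u assume u: "1/2 - 1/k \<le> u" "u \<le> 1/2 - 1/(2*k)"
    have "0 < 1/(2*real k)" using kp by simp
    then have u2: "u < 1/2" using u(2) by linarith
    have u0: "0 \<le> u" using u(1) s0 by linarith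
    show "2 ^ (nat \<lfloor>2 * real k * (1/2 - 1/k)\<rfloor> + 1) / 8 * c \<le> price k c u"
      by (rule price_ge[OF c_nonneg u0 u2 u(1)])
  qed (use c_nonneg s0 kp in \<open>auto simp: field_simps\<close>)
  also have "\<dots> \<le> integral {0..Z} (price k c)"
    by (rule int_mono) (use c_nonneg s0 Z_bounds ZZ kp in \<open>auto simp: field_simps\<close>)
  finally have fin: "((1/2 - 1/(2*k)) - (1/2 - 1/k)) * (2 ^ (nat \<lfloor>2 * real k * (1/2 - 1/k)\<rfloor> + 1) / 8 * c) \<le> integral {0..Z} (price k c)" .
  have len: "(1/2 - 1/(2*real k)) - (1/2 - 1/k) = 1/(2*real k)" using kp by (simp add: field_simps)
  have "(1/(2*k)) * (2 ^ (k - 1) / 8 * c) \<le> integral {0..Z} (price k c)"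
    using fin unfolding len fl by simp
  moreover have "(2::real) ^ k = 2 * 2 ^ (k - 1)" using k2 by (cases k) auto
  ultimately show ?thesis using kp by (simp add: field_simps)
qed

lemma r2_bound:
  assumes k1: "1 \<le> k" and s: "s < n" "s \<noteq> r" and cs: "c \<le> 4 * vbar v B s (1/2)"
  shows "c / (16 * k) \<le> integral {0..Z} (price k c) \<or> c / (16 * k) \<le> vbar v B s (x s)"
proof -
  have kp: "0 < real k" using k1 by simp
  obtain m where m: "m < length ord" "ord ! m = s" using idx s by blast
  have zb: "0 \<le> z m" "z m \<le> Z" using z_bounds[of m] z_le_Z[of m] m by auto
  show ?thesis
  proof (cases "1/(4*k) \<le> z m")
    case True
    have "1/(4*k) \<le> Z" using True zb by linarith
    have "(1/(4*k) - 0) * (2 ^ (nat \<lfloor>2 * real k * 0\<rfloor> + 1) / 8 * c) \<le> integral {0..1/(4*k)} (price k c)"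
    proof (rule int_ge)
      fix u assume u: "0 \<le> u" "u \<le> 1/(4*k)"
      have "1/(4*real k) \<le> 1/4" using k1 by (simp add: field_simps)
      then have "u < 1/2" using u(2) by linarith
      then show "2 ^ (nat \<lfloor>2 * real k * 0\<rfloor> + 1) / 8 * c \<le> price k c u"
        by (rule price_ge[OF c_nonneg u(1)]) (use u in auto)
    qed (use c_nonneg kp in auto)
    also have "\<dots> \<le> integral {0..Z} (price k c)"
      by (rule int_mono) (use c_nonneg kp Z_bounds \<open>1/(4*k) \<le> Z\<close> in auto)
    finally show ?thesis by (simp add: field_simps)
  next
    case False
    let ?a = "1/(4 * real k)"
    have vs: "valuation (v s)" using val s by simp
    have zy: "z m + ?a < 1/(2*k)" using False kp by (simp add: field_simps)
    have "1/(2*real k) \<le> 1/2" using k1 by (simp add: field_simps)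
    hence zy2: "z m + ?a \<le> 1/2" using zy by linarith
    have pb: "price k c t \<le> c/4" if "t \<le> z m + ?a" for t
    proof -
      have "\<lfloor>2 * real k * (z m + ?a)\<rfloor> = 0"
        using zy zb kp by (simp add: floor_eq_iff field_simps)
      with price_le[OF c_nonneg that, of k] show ?thesis by simp
    qed
    have cl: "cost k c (z m) ?a \<le> ?a * (c/4)"
      by (rule cost_le) (use c_nonneg zb kp zy2 pb in auto)
    have cl2: "?a * (c/4) \<le> vbar v B s (1/2) / (4*k)" using cs kp by (simp add: field_simps)
    have vbh: "vbar v B s (1/2) \<le> B s" "vbar v B s (1/2) \<le> v s (1/2)" unfolding vbar_def by auto
    have vb0: "0 \<le> vbar v B s (1/2)" using vbar_nonneg[of v s B "1/2"] vs Bpos s by simp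
    have "vbar v B s (1/2) * 1 \<le> vbar v B s (1/2) * (4*k)"
      using vb0 k1 by (intro mult_left_mono) auto
    hence "vbar v B s (1/2) / (4*k) \<le> vbar v B s (1/2)"
      using kp by (simp add: field_simps)
    hence cB: "cost k c (z m) ?a \<le> B s" using cl cl2 vbh by linarith
    have dev: "v s ?a - cost k c (z m) ?a \<le> v s (x s) - cost k c (z m) (x s)"
      using step(4)[OF m(1), of ?a] cB zy2 kp m by auto
    have pnn: "0 \<le> cost k c (z m) (x s)" using step(5)[OF m(1)] pay_nonneg[OF m(1)] m by simp
    have "v s (real (2*k) * ?a) \<le> real (2*k) * v s ?a"
      by (rule val_mult[OF vs]) (use kp in auto)
    moreover have "real (2*k) * ?a = 1/2" using kp by simp
    ultimately have "v s (1/2) / (2*k) \<le> v s ?a" using kp by (simp add: field_simps)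
    moreover have "vbar v B s (1/2) / (2*k) \<le> v s (1/2) / (2*k)" using vbh kp by (intro divide_right_mono) auto
    ultimately have "vbar v B s (1/2) / (2*k) \<le> v s ?a" by linarith
    moreover have "vbar v B s (1/2) / (4*k) = vbar v B s (1/2) / (2*k) - vbar v B s (1/2) / (4*k)"
      using kp by (simp add: field_simps)
    ultimately have "vbar v B s (1/2) / (4*k) \<le> v s (x s)" using dev pnn cl cl2 by linarith
    moreover have "c / (16 * k) \<le> vbar v B s (1/2) / (4*k)" using cs kp by (simp add: field_simps)
    moreover have "vbar v B s (1/2) / (4*k) \<le> B s"
      using \<open>vbar v B s (1/2) / (4*k) \<le> vbar v B s (1/2)\<close> vbh by linarith
    ultimately show ?thesis unfolding vbar_def by auto
  qed
qed

end



lemma arith1: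
  fixes W c k q R L T :: real
  assumes "0 \<le> W" "0 \<le> c" "c \<le> 16*k*W" "q \<le> c/4 + 4*k*R" "R \<le> W" "1 \<le> k" "k \<le> 9*L" "T \<le> 2*c + W + 2*q + 4*k*c"
  shows "T \<le> 10000*L^2*W"
proof -
  have h1: "k*R \<le> k*W" using assms by (intro mult_left_mono) auto
  have "k*c \<le> k*(16*k*W)" using assms by (intro mult_left_mono) auto
  hence h2: "k*c \<le> 16*(k*(k*W))" by (simp add: algebra_simps)
  have h3: "c \<le> 16*(k*W)" using assms(3) by (simp add: algebra_simps)
  have "T \<le> 2*c + W + c/2 + 8*(k*R) + 4*(k*c)" using assms by simp
  also have "\<dots> \<le> 32*(k*W) + W + 8*(k*W) + 8*(k*W) + 4*(16*(k*(k*W)))"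
    using h1 h2 h3 by linarith
  also have "\<dots> = (1 + 48*k + 64*k*k) * W" by (simp add: algebra_simps)
  also have "\<dots> \<le> (120*(k*k)) * W"
  proof (intro mult_right_mono)
    have "k \<le> k*k" using assms(6) by (simp add: mult_le_cancel_left1)
    then show "1 + 48*k + 64*k*k \<le> 120*(k*k)" using assms(6) by linarith
  qed (use assms in auto)
  also have "\<dots> \<le> (120*((9*L)*(9*L))) * W"
  proof -
    have "k*k \<le> (9*L)*(9*L)" using assms(6,7) by (intro mult_mono) auto
    then show ?thesis using assms(1) by (intro mult_right_mono) auto
  qed
  also have "\<dots> \<le> 10000*L^2*W" using assms by (simp add: power2_eq_square algebra_simps)
  finally show ?thesis .
qed

lemma arith2:
  fixes W c k R L T :: real and n kk :: nat
  assumes "0 \<le> W" "0 \<le> c" "2 ^ kk * c / (32*k) \<le> R" "R \<le> W" "1 \<le> k" "k \<le> 9*L" "1 \<le> L"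
    "T \<le> 2 * real n * c" "real n \<le> 2 ^ kk" "k = real kk"
  shows "T \<le> 10000*L^2*W"
proof -
  define P :: real where "P = 2 ^ kk"
  have "2 * real n * c \<le> 2 * P * c" using assms(2,9) unfolding P_def by (intro mult_right_mono) auto
  hence "T \<le> 2 * P * c" using assms(8) by linarith
  also have "2 * P * c = 64 * k * (P * c / (32*k))" using assms(5) by (simp add: field_simps)
  also have "\<dots> \<le> 64 * k * W"
  proof -
    have "P * c / (32*k) \<le> W" using assms(3,4) unfolding P_def by linarith
    then show ?thesis using assms(5) by (intro mult_left_mono) auto
  qed
  also have "\<dots> \<le> 64 * (9*(L*L)) * W"
  proof -
    have "L \<le> L*L" using assms(7) by (simp add: mult_le_cancel_left1)
    hence "k \<le> 9*(L*L)" using assms(6) by linarith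
    then show ?thesis using assms(1) by (intro mult_right_mono mult_left_mono) auto
  qed
  also have "\<dots> \<le> 10000*L^2*W" using assms(1,7) by (simp add: power2_eq_square algebra_simps)
  finally show ?thesis .
qed

lemma kpar_facts:
  assumes "2 \<le> n"
  shows "1 \<le> log 2 (real n)" "8 \<le> kpar n" "real (kpar n) \<le> 9 * log 2 (real n)" "real n \<le> 2 ^ kpar n"
proof -
  let ?L = "log 2 (real n)"
  show L1: "1 \<le> ?L" using assms by (simp add: le_log_iff)
  have c1: "8 * ?L \<le> of_int \<lceil>8 * ?L\<rceil>" by (rule le_of_int_ceiling)
  have c2: "of_int \<lceil>8 * ?L\<rceil> < 8 * ?L + 1" using ceiling_correct[of "8 * ?L"] by linarith
  have nn: "0 \<le> \<lceil>8 * ?L\<rceil>" using L1 c1 by linarith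
  have rk: "real (kpar n) = of_int \<lceil>8 * ?L\<rceil>" unfolding kpar_def using nn by simp
  show "real (kpar n) \<le> 9 * ?L" using rk c2 L1 by linarith
  have "8 \<le> real (kpar n)" using rk c1 L1 by linarith
  then show "8 \<le> kpar n" by simp
  have "real n = 2 powr ?L" using assms by simp
  also have "\<dots> \<le> 2 powr real (kpar n)" using rk c1 L1 by (intro powr_mono) linarith+
  also have "\<dots> = 2 ^ kpar n" by (simp add: powr_realpow)
  finally show "real n \<le> 2 ^ kpar n" .
qed




lemma (in sw) pay_nn: assumes "i < n" "i \<noteq> r" shows "0 \<le> pay i"
proof -
  obtain m where m: "m < length ord" "ord ! m = i" using idx assms by blast
  then show ?thesis using pay_nonneg by blast
qed

lemma main_bound:
  assumes n2: "n \<ge> 2" and val: "\<forall>i<n. valuation (v i)" and Bp: "\<forall>i<n. B i > 0"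
    and r1: "is_r1 v B n r1" and r2: "is_r2 v B n r1 r2"
    and s1: "sell_without v B n r1 ord1 x pay" and s2: "sell_without v B n r2 ord2 x' pay'"
    and y: "\<forall>i<n. 0 \<le> y i" "(\<Sum>i<n. y i) = 1"
  shows "liquid_welfare v B n y \<le> 10000 * (log 2 (real n))^2 *
           liquid_welfare v B n (ep_allocation v B r1 r2 x x' pay')"
proof -
  have r1n: "r1 < n" and r2n: "r2 < n" and r21: "r2 \<noteq> r1"
    and cmax: "\<And>i. i < n \<Longrightarrow> vbar v B i (1/2) \<le> vbar v B r1 (1/2)"
    and c2max: "\<And>i. i < n \<Longrightarrow> i \<noteq> r1 \<Longrightarrow> vbar v B i (1/2) \<le> vbar v B r2 (1/2)"
    using r1 r2 unfolding is_r1_def is_r2_def by auto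
  interpret A: sw v B n r1 ord1 x pay
    by unfold_locales (use s1 val Bp r1n in auto)
  interpret S: sw v B n r2 ord2 x' pay'
    by unfold_locales (use s2 val Bp r2n in auto)
  let ?L = "log 2 (real n)"
  define k where "k = kpar n"
  define c where "c = vbar v B r1 (1/2)"
  define c2 where "c2 = vbar v B r2 (1/2)"
  define ya where "ya = ep_allocation v B r1 r2 x x' pay'"
  define W where "W = liquid_welfare v B n ya"
  define Wo where "Wo = (\<Sum>i\<in>{i. i < n \<and> i \<noteq> r1}. vbar v B i (x i))"
  define R where "R = integral {0..A.Z} (price k c)"
  have Ak: "A.k = k" unfolding A.k_def k_def ..
  have Ac: "A.c = c" unfolding A.c_def c_def ..
  have kf: "1 \<le> log 2 (real n)" "8 \<le> k" "real k \<le> 9 * ?L" "real n \<le> 2 ^ k"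
    using kpar_facts[OF n2] unfolding k_def by auto
  have k1: "1 \<le> A.k" "2 \<le> A.k" using kf Ak by auto
  have kp: "0 < real k" using kf by simp
  have c0: "0 \<le> c" using A.c_nonneg Ac by simp
  have vb0: "\<And>i t. i < n \<Longrightarrow> 0 \<le> t \<Longrightarrow> t \<le> 1 \<Longrightarrow> 0 \<le> vbar v B i t"
    using vbar_nonneg val Bp by blast
  have yar: "ya i = x i" if "i \<noteq> r1" for i unfolding ya_def ep_allocation_def using that by simp
  have x'r1: "0 \<le> x' r1" "x' r1 \<le> 1/2" using S.x_bounds[OF r1n] r21 by auto
  have ya_r1: "0 \<le> vbar v B r1 (ya r1)"
    unfolding ya_def ep_allocation_def using vb0[OF r1n] x'r1 by auto
  have setr: "{..<n} - {r1} = {i. i < n \<and> i \<noteq> r1}" by auto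
  have Wsplit: "W = vbar v B r1 (ya r1) + Wo"
  proof -
    have "W = vbar v B r1 (ya r1) + (\<Sum>i\<in>{..<n} - {r1}. vbar v B i (ya i))"
      unfolding W_def liquid_welfare_def using r1n by (simp add: sum.remove)
    also have "(\<Sum>i\<in>{..<n} - {r1}. vbar v B i (ya i)) = Wo"
      unfolding setr Wo_def by (rule sum.cong) (auto simp: yar)
    finally show ?thesis .
  qed
  have xvb0: "0 \<le> vbar v B i (x i)" if "i < n" "i \<noteq> r1" for i
  proof -
    have "0 \<le> x i" "x i \<le> 1/2" using A.x_bounds[OF that] by auto
    then show ?thesis using vb0[OF that(1), of "x i"] by simp
  qed
  have Wo0: "0 \<le> Wo" unfolding Wo_def using xvb0 by (auto intro!: sum_nonneg)
  have RWo: "R \<le> Wo" unfolding R_def Wo_def using A.Rev_le Ak Ac by simp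
  have RW: "R \<le> W" using RWo Wsplit ya_r1 by linarith
  have W0: "0 \<le> W" using Wo0 Wsplit ya_r1 by linarith
  have Wr2: "vbar v B r2 (x r2) \<le> W"
  proof -
    have "vbar v B r2 (x r2) \<le> Wo" unfolding Wo_def
      by (rule member_le_sum) (use r2n r21 xvb0 in auto)
    then show ?thesis using Wsplit ya_r1 by linarith
  qed
  have cd: "c/(16*k) \<le> c/2" by (rule divide_left_mono) (use c0 kf in auto)
  have part1: "c \<le> 16 * real k * W"
  proof -
    have "c / (16 * k) \<le> W"
    proof (cases "v r1 (x' r1) - pay' r1 \<ge> v r1 (1/2) - 2 * c2")
      case False
      hence h: "ya r1 = 1/2" unfolding ya_def ep_allocation_def c2_def by simp
      have "vbar v B r1 (ya r1) = c" unfolding h c_def by (rule refl)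
      hence "c \<le> W" using Wsplit Wo0 by linarith
      moreover have "c / (16*k) \<le> c" using c0 cd by linarith
      ultimately show ?thesis by linarith
    next
      case cond: True
      hence yr1: "ya r1 = x' r1" unfolding ya_def ep_allocation_def c2_def by simp
      show ?thesis
      proof (cases "4 * c2 \<le> v r1 (1/2)")
        case True
        have "0 \<le> pay' r1" using S.pay_nn[OF r1n] r21 by auto
        hence "v r1 (1/2) / 2 \<le> v r1 (x' r1)" using cond True by linarith
        moreover have "c \<le> v r1 (1/2)" "c \<le> B r1" unfolding c_def vbar_def by auto
        ultimately have "c / 2 \<le> vbar v B r1 (ya r1)" unfolding yr1 vbar_def using c0 by auto
        moreover have "c / (16*k) \<le> c / 2" using cd .
        ultimately show ?thesis using Wsplit Wo0 by linarith
      next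
        case False
        have "c \<le> v r1 (1/2)" unfolding c_def vbar_def by auto
        hence cs: "A.c \<le> 4 * vbar v B r2 (1/2)" using False Ac c2_def by linarith
        from A.r2_bound[OF k1(1) r2n r21 cs]
        show ?thesis using RW Wr2 Ak Ac R_def by auto
      qed
    qed
    then show ?thesis using kp by (simp add: field_simps)
  qed
  have yle1: "\<And>i. i < n \<Longrightarrow> y i \<le> 1"
  proof -
    fix i assume "i < n"
    have "y i \<le> (\<Sum>i<n. y i)" by (rule member_le_sum) (use y \<open>i<n\<close> in auto)
    then show "y i \<le> 1" using y by simp
  qed
  have ysplit: "liquid_welfare v B n y = vbar v B r1 (y r1) + (\<Sum>i\<in>{i. i < n \<and> i \<noteq> r1}. vbar v B i (y i))"
    unfolding liquid_welfare_def using r1n setr by (simp add: sum.remove)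
  have yr1: "vbar v B r1 (y r1) \<le> 2 * c"
    unfolding c_def by (rule vbar_le2) (use val Bp r1n y yle1 in auto)
  have yo: "(\<Sum>i\<in>{i. i < n \<and> i \<noteq> r1}. y i) \<le> 1"
  proof -
    have "(\<Sum>i\<in>{i. i < n \<and> i \<noteq> r1}. y i) \<le> (\<Sum>i<n. y i)"
      by (rule sum_mono2) (use y in auto)
    then show ?thesis using y by simp
  qed
  show ?thesis
  proof (cases "A.Z \<le> 1/2 - 1/(2*A.k)")
    case True
    define K where "K = 2 * A.q + 4 * A.k * A.c"
    have K0: "0 \<le> K" unfolding K_def using A.q_nonneg A.c_nonneg by simp
    have "(\<Sum>i\<in>{i. i < n \<and> i \<noteq> r1}. vbar v B i (y i)) \<le> (\<Sum>i\<in>{i. i < n \<and> i \<noteq> r1}. vbar v B i (x i) + K * y i)"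
    proof (rule sum_mono)
      fix i assume "i \<in> {i. i < n \<and> i \<noteq> r1}"
      hence i: "i < n" "i \<noteq> r1" by auto
      have ci: "vbar v B i (1/2) \<le> A.c" using cmax[OF i(1)] unfolding A.c_def .
      show "vbar v B i (y i) \<le> vbar v B i (x i) + K * y i"
        unfolding K_def by (rule A.dev_bound[OF k1(1) True i y(1)[rule_format, OF i(1)] yle1[OF i(1)] ci])
    qed
    also have "\<dots> = Wo + K * (\<Sum>i\<in>{i. i < n \<and> i \<noteq> r1}. y i)"
      unfolding Wo_def by (simp add: sum.distrib sum_distrib_left)
    also have "\<dots> \<le> Wo + K" using yo K0 by (simp add: mult_left_le)
    finally have "(\<Sum>i\<in>{i. i < n \<and> i \<noteq> r1}. vbar v B i (y i)) \<le> Wo + K" .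
    hence T: "liquid_welfare v B n y \<le> 2 * c + W + 2 * A.q + 4 * real k * c"
      using ysplit yr1 Wsplit ya_r1 unfolding K_def Ak Ac by simp
    have "0 < 1/(2*real A.k)" using k1 by simp
    hence Zl: "A.Z < 1/2" using True by linarith
    have "A.q \<le> A.c/4 + 4 * A.k * integral {0..A.Z} (price A.k A.c)" by (rule A.q_le[OF k1(1) Zl])
    hence Q: "A.q \<le> c/4 + 4 * real k * R" unfolding Ak Ac R_def by simp
    have "liquid_welfare v B n y \<le> 10000 * ?L^2 * W"
      by (rule arith1[OF W0 c0 part1 Q RW _ kf(3) T]) (use kf in simp)
    then show ?thesis unfolding W_def ya_def .
  next
    case False
    have big: "2 ^ k * c / (32 * real k) \<le> R"
      using A.rev_big[OF k1(2)] False Ak Ac R_def by simp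
    have "liquid_welfare v B n y \<le> (\<Sum>i<n. 2 * c)"
      unfolding liquid_welfare_def
    proof (rule sum_mono)
      fix i assume "i \<in> {..<n}"
      then have i: "i < n" by simp
      have "vbar v B i (y i) \<le> 2 * vbar v B i (1/2)"
        by (rule vbar_le2) (use val Bp i y yle1 in auto)
      then show "vbar v B i (y i) \<le> 2 * c" using cmax[OF i] c_def by simp
    qed
    hence T0: "liquid_welfare v B n y \<le> 2 * real n * c" by simp
    hence T: "liquid_welfare v B n y \<le> 2 * real n * c" .
    have "liquid_welfare v B n y \<le> 10000 * ?L^2 * W"
      by (rule arith2[OF W0 c0 big RW _ kf(3) kf(1) T _ refl]) (use kf in simp_all)
    then show ?thesis unfolding W_def ya_def .
  qed
qed



theorem mainTheorem18:
  shows "\<exists>C>0. \<forall>n::nat. \<forall>v B r1 r2 ord1 ord2 x pay x' pay'.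
     n \<ge> 2 \<longrightarrow>
     (\<forall>i<n. valuation (v i)) \<longrightarrow>
     (\<forall>i<n. B i > 0) \<longrightarrow>
     is_r1 v B n r1 \<longrightarrow> is_r2 v B n r1 r2 \<longrightarrow>
     sell_without v B n r1 ord1 x pay \<longrightarrow>
     sell_without v B n r2 ord2 x' pay' \<longrightarrow>
     liquid_welfare v B n (ep_allocation v B r1 r2 x x' pay')
       \<ge> opt_liquid_welfare v B n / (C * (log 2 (real n))^2)"
proof (intro exI[of _ "10000::real"] conjI allI impI)
  show "(0::real) < 10000" by simp
  fix n :: nat and v B r1 r2 ord1 ord2 x pay x' pay'
  assume n2: "n \<ge> 2" and val: "\<forall>i<n. valuation (v i)" and Bp: "\<forall>i<n. B i > 0"
    and r1: "is_r1 v B n r1" and r2: "is_r2 v B n r1 r2"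
    and s1: "sell_without v B n r1 ord1 x pay" and s2: "sell_without v B n r2 ord2 x' pay'"
  let ?W = "liquid_welfare v B n (ep_allocation v B r1 r2 x x' pay')"
  let ?L = "log 2 (real n)"
  have L1: "1 \<le> ?L" using kpar_facts[OF n2] by simp
  have ne: "{liquid_welfare v B n y | y. (\<forall>i<n. 0 \<le> y i) \<and> (\<Sum>i<n. y i) = 1} \<noteq> {}"
  proof -
    define y0 :: "nat \<Rightarrow> real" where "y0 = (\<lambda>i. if i = 0 then 1 else 0)"
    have "(\<Sum>i<n. y0 i) = 1" unfolding y0_def using n2 by (simp add: sum.delta)
    moreover have "\<forall>i<n. 0 \<le> y0 i" unfolding y0_def by simp
    ultimately show ?thesis by blast
  qed
  have "opt_liquid_welfare v B n \<le> 10000 * ?L^2 * ?W"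
    unfolding opt_liquid_welfare_def
  proof (rule cSup_least[OF ne])
    fix t assume "t \<in> {liquid_welfare v B n y | y. (\<forall>i<n. 0 \<le> y i) \<and> (\<Sum>i<n. y i) = 1}"
    then obtain y where y: "\<forall>i<n. 0 \<le> y i" "(\<Sum>i<n. y i) = 1" and t: "t = liquid_welfare v B n y" by blast
    show "t \<le> 10000 * ?L^2 * ?W" unfolding t by (rule main_bound[OF n2 val Bp r1 r2 s1 s2 y])
  qed
  moreover have "0 < 10000 * ?L^2" using L1 by simp
  ultimately show "opt_liquid_welfare v B n / (10000 * ?L^2) \<le> ?W"
    by (simp add: pos_divide_le_eq mult.commute)
qed

end
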